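(* Let $T$ be either the Giry monad $P$ or the subprobability monad $M$ on $\mathbf{Meas}$, and let $\theta_Y:DY\to TY$ be the equalizer of $\eta_{TY},T\eta_Y:TY\to TTY$. Then $D$ is an idempotent submonad of $T$, and for all measurable spaces $X,Y$ a Kleisli morphism (Markov kernel) $f:X\rightsquigarrow Y$ is deterministic if and only if $f^\sharp:X\to TY$ factors through $\theta_Y$; i.e. the Kleisli morphisms of $D$ are exactly the deterministic morphisms of $\mathsf{Kl}(T)$.
   Context: $PX$: probability measures on $X$ with the coarsest $\sigma$-algebra making $p\mapsto p(A)$ measurable; $\eta_X(x)=\delta_x$; $\mu_X(\rho)(A)=\int_{PX}p(A)\,\rho(dp)$; monoidal structure given by product measures. $M$ is analogous for subprobability measures. $\mathsf{Kl}(T)$: morphisms $f:X\rightsquigarrow Y$ correspond to measurable $f^\sharp:X\to TY$, composition $(g\circledcirc f)^\sharp=\mu\circ T(g^\sharp)\circ f^\sharp$, tensor $\otimes$ equal to $\times$ on objects with $(f\otimes g)^\sharp$ the product kernel. $\mathsf{copy}_X^\sharp(x)=\delta_{(x,x)}$, $\mathsf{del}_X^\sharp=\eta\circ!_X$. $f$ is deterministic if $\mathsf{copy}_Y\circledcirc f=(f\otimes f)\circledcirc\mathsf{copy}_X$ and $\mathsf{del}_Y\circledcirc f=\mathsf{del}_X$. The monad $D$: $Dg$ is the unique map with $\theta_Z\circ Dg=Tg\circ\theta_Y$, unit $e_X$ the unique map with $\theta_X\circ e_X=\eta_X$, multiplication $m_X$ the unique map with $\theta_X\circ m_X=\mu_X\circ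 T\theta_X\circ\theta_{DX}$; idempotent means its multiplication is an isomorphism. *)

theory Defs
  imports "HOL-Probability.Probability"
begin

datatype giry_kind = Giry | Subprob

definition Tm :: "giry_kind \<Rightarrow> 'a measure \<Rightarrow> 'a measure measure" where
  "Tm k X = (case k of Giry \<Rightarrow> prob_algebra X | Subprob \<Rightarrow> subprob_algebra X)"

text \<open>T on morphisms is pushforward: T g p = distr p Y g.  The unit is return.
  The multiplication, as in the paper: mu_X(rho)(A) = integral of p(A) d rho(p).\<close>
definition mu :: "'a measure \<Rightarrow> 'a measure measure \<Rightarrow> 'a measure" where
  "mu X \<rho> = measure_of (space X) (sets X) (\<lambda>A. \<integral>\<^sup>+ p. emeasure p A \<partial>\<rho>)"

text \<open>The equalizer theta_Y : DY \<rightarrow> TY of eta_{TY} and T eta_Y in Meas: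
  the subset of TY on which the two maps agree, with the subspace sigma-algebra;
  theta_Y is the inclusion.\<close>
definition Dsp :: "giry_kind \<Rightarrow> 'a measure \<Rightarrow> 'a measure measure" where
  "Dsp k Y = restrict_space (Tm k Y)
     {p \<in> space (Tm k Y). return (Tm k Y) p = distr p (Tm k Y) (return Y)}"

definition theta :: "'a measure \<Rightarrow> 'a measure" where
  "theta p = p"

text \<open>The multiplication m_X of D (determined by theta_X o m_X = mu_X o T theta_X o theta_{DX}).\<close>
definition Dmult :: "giry_kind \<Rightarrow> 'a measure \<Rightarrow> 'a measure measure \<Rightarrow> 'a measure" where
  "Dmult k X \<rho> = mu X (distr (theta \<rho>) (Tm k X) theta)"

text \<open>Kleisli category Kl(T): a morphism X \<leadsto> Y is a measurable f : X \<rightarrow> TY.\<close>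
definition kcomp :: "giry_kind \<Rightarrow> 'c measure \<Rightarrow> ('b \<Rightarrow> 'c measure) \<Rightarrow> ('a \<Rightarrow> 'b measure) \<Rightarrow> 'a \<Rightarrow> 'c measure" where
  "kcomp k Z g f = (\<lambda>x. mu Z (distr (f x) (Tm k Z) g))"

definition ktensor :: "('a \<Rightarrow> 'b measure) \<Rightarrow> ('c \<Rightarrow> 'd measure) \<Rightarrow> 'a \<times> 'c \<Rightarrow> ('b \<times> 'd) measure" where
  "ktensor f g = (\<lambda>(x1, x2). f x1 \<Otimes>\<^sub>M g x2)"

definition kcopy :: "'a measure \<Rightarrow> 'a \<Rightarrow> ('a \<times> 'a) measure" where
  "kcopy X = (\<lambda>x. return (X \<Otimes>\<^sub>M X) (x, x))"

definition one_space :: "unit measure" where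
  "one_space = count_space UNIV"

definition kdel :: "'a measure \<Rightarrow> 'a \<Rightarrow> unit measure" where
  "kdel X = (\<lambda>x. return one_space ())"

text \<open>Deterministic Kleisli morphisms (equality of morphisms X \<leadsto> Z means equality on space X).\<close>
definition deterministic :: "giry_kind \<Rightarrow> 'a measure \<Rightarrow> 'b measure \<Rightarrow> ('a \<Rightarrow> 'b measure) \<Rightarrow> bool" where
  "deterministic k X Y f \<longleftrightarrow>
     (\<forall>x\<in>space X. kcomp k (Y \<Otimes>\<^sub>M Y) (kcopy Y) f x
                   = kcomp k (Y \<Otimes>\<^sub>M Y) (ktensor f f) (kcopy X) x) \<and>
     (\<forall>x\<in>space X. kcomp k one_space (kdel Y) f x = kdel X x)"

end

theory Submission
  imports Defs
begin


lemma space_Tm: "p \<in> space (Tm k X) \<longleftrightarrow> sets p = sets X \<and> (case k of Giry \<Rightarrow> prob_space p | Subprob \<Rightarrow> subprob_space p)"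
  by (cases k) (auto simp: Tm_def space_prob_algebra space_subprob_algebra)

lemma space_TmD: "p \<in> space (Tm k X) \<Longrightarrow> sets p = sets X \<and> subprob_space p"
  by (cases k) (auto simp: space_Tm prob_space_imp_subprob_space)

lemma prob_in_Tm: "sets p = sets X \<Longrightarrow> prob_space p \<Longrightarrow> p \<in> space (Tm k X)"
  by (cases k) (auto simp: space_Tm prob_space_imp_subprob_space)

lemma measurable_emeasure_Tm: "A \<in> sets X \<Longrightarrow> (\<lambda>p. emeasure p A) \<in> borel_measurable (Tm k X)"
  by (cases k) (auto simp: Tm_def prob_algebra_def intro!: measurable_restrict_space1)

lemma measurable_TmI:
  assumes "\<And>a. a \<in> space M \<Longrightarrow> K a \<in> space (Tm k N)"
    and "\<And>A. A \<in> sets N \<Longrightarrow> (\<lambda>a. emeasure (K a) A) \<in> borel_measurable M"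
  shows "K \<in> measurable M (Tm k N)"
proof (cases k)
  case Giry
  then show ?thesis using assms unfolding Tm_def
    by (auto intro!: measurable_prob_algebraI measurable_subprob_algebra prob_space_imp_subprob_space simp: space_prob_algebra)
next
  case Subprob
  then show ?thesis using assms unfolding Tm_def
    by (auto intro!: measurable_subprob_algebra simp: space_subprob_algebra)
qed

lemma measurable_return_Tm: "return X \<in> measurable X (Tm k X)"
  by (cases k) (auto simp: Tm_def)

lemma measurable_distr_Tm: "g \<in> measurable X Y \<Longrightarrow> (\<lambda>p. distr p Y g) \<in> measurable (Tm k X) (Tm k Y)"
  by (cases k) (auto simp: Tm_def intro: measurable_distr measurable_distr_prob_space)

lemma sets_mu[simp]: "sets (mu X \<rho>) = sets X" and space_mu[simp]: "space (mu X \<rho>) = space X"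
  by (simp_all add: mu_def)

lemma emeasure_mu:
  assumes M: "sets \<rho> = sets (Tm k X)" and A: "A \<in> sets X"
  shows "emeasure (mu X \<rho>) A = (\<integral>\<^sup>+ p. emeasure p A \<partial>\<rho>)"
proof (rule emeasure_measure_of[OF mu_def])
  have sp: "space \<rho> = space (Tm k X)" using M by (rule sets_eq_imp_space_eq)
  show "countably_additive (sets (mu X \<rho>)) (\<lambda>B. \<integral>\<^sup>+ p. emeasure p B \<partial>\<rho>)"
  proof (rule countably_additiveI)
    fix A :: "nat \<Rightarrow> 'a set" assume A: "range A \<subseteq> sets (mu X \<rho>)" "disjoint_family A"
    have "(\<Sum>i. \<integral>\<^sup>+ M'. emeasure M' (A i) \<partial>\<rho>) = (\<integral>\<^sup>+M'. (\<Sum>i. emeasure M' (A i)) \<partial>\<rho>)"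
      using A M by (subst nn_integral_suminf) (auto simp: measurable_emeasure_Tm cong: measurable_cong_sets)
    also have "\<dots> = (\<integral>\<^sup>+M'. emeasure M' (\<Union>i. A i) \<partial>\<rho>)"
    proof (rule nn_integral_cong)
      fix M' assume "M' \<in> space \<rho>"
      then show "(\<Sum>i. emeasure M' (A i)) = emeasure M' (\<Union>i. A i)"
        using A sp by (intro suminf_emeasure) (auto dest!: space_TmD)
    qed
    finally show "(\<Sum>i. \<integral>\<^sup>+M'. emeasure M' (A i) \<partial>\<rho>) = (\<integral>\<^sup>+M'. emeasure M' (\<Union>i. A i) \<partial>\<rho>)" .
  qed
qed (auto simp: A sets.space_closed positive_def)

lemma mu_return:
  assumes q: "q \<in> space (Tm k Z)"
  shows "mu Z (return (Tm k Z) q) = q"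
proof (rule measure_eqI)
  show "sets (mu Z (return (Tm k Z) q)) = sets q" using space_TmD[OF q] by simp
  fix A assume "A \<in> sets (mu Z (return (Tm k Z) q))"
  then have A: "A \<in> sets Z" by simp
  show "emeasure (mu Z (return (Tm k Z) q)) A = emeasure q A"
    by (simp add: emeasure_mu[where k=k] A nn_integral_return q measurable_emeasure_Tm)
qed

lemma measurable_mu: "mu X \<in> measurable (Tm k (Tm k X)) (Tm k X)"
proof (rule measurable_TmI)
  fix \<rho> assume r: "\<rho> \<in> space (Tm k (Tm k X))"
  then have sr: "sets \<rho> = sets (Tm k X)" and sub: "subprob_space \<rho>" using space_TmD by blast+
  have sp: "space \<rho> = space (Tm k X)" using sr by (rule sets_eq_imp_space_eq)
  have e: "emeasure (mu X \<rho>) (space X) = (\<integral>\<^sup>+ p. emeasure p (space X) \<partial>\<rho>)"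
    using emeasure_mu[OF sr] by simp
  show "mu X \<rho> \<in> space (Tm k X)"
  proof (cases k)
    case Giry
    then have pr: "prob_space \<rho>" using r by (simp add: space_Tm)
    have "(\<integral>\<^sup>+ p. emeasure p (space X) \<partial>\<rho>) = (\<integral>\<^sup>+ p. 1 \<partial>\<rho>)"
      apply (rule nn_integral_cong)
      using Giry sp by (auto simp: space_Tm dest: prob_space.emeasure_space_1 sets_eq_imp_space_eq) (metis prob_space.emeasure_space_1 sets_eq_imp_space_eq)
    then have "emeasure (mu X \<rho>) (space (mu X \<rho>)) = 1" using e pr prob_space.emeasure_space_1[OF pr]
      by simp
    then show ?thesis using Giry by (simp add: space_Tm prob_spaceI)
  next
    case Subprob
    have "(\<integral>\<^sup>+ p. emeasure p (space X) \<partial>\<rho>) \<le> (\<integral>\<^sup>+ p. 1 \<partial>\<rho>)"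
      apply (rule nn_integral_mono)
      using sp by (auto dest!: space_TmD dest: subprob_space.subprob_emeasure_le_1)
    also have "\<dots> \<le> 1" using subprob_space.emeasure_space_le_1[OF sub] by simp
    finally have "emeasure (mu X \<rho>) (space (mu X \<rho>)) \<le> 1" using e by simp
    moreover have "space X \<noteq> {}"
    proof -
      obtain p where "p \<in> space \<rho>" using subprob_space.subprob_not_empty[OF sub] by blast
      then have "p \<in> space (Tm k X)" using sp by simp
      then have "sets p = sets X" "subprob_space p" using space_TmD by blast+
      then show ?thesis using subprob_space.subprob_not_empty sets_eq_imp_space_eq by metis
    qed
    ultimately show ?thesis using Subprob sub by (auto simp: space_Tm intro!: subprob_spaceI)
  qed
next
  fix A assume A: "A \<in> sets X"
  have "(\<lambda>\<rho>. \<integral>\<^sup>+ p. emeasure p A \<partial>\<rho>) \<in> borel_measurable (Tm k (Tm k X))"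
  proof (cases k)
    case Giry
    then show ?thesis unfolding Tm_def prob_algebra_def using A
      by (auto intro!: measurable_restrict_space1 nn_integral_measurable_subprob_algebra measurable_emeasure_Tm[of A X Giry, unfolded Tm_def prob_algebra_def, simplified])
  next
    case Subprob
    then show ?thesis unfolding Tm_def using A
      by (auto intro!: nn_integral_measurable_subprob_algebra)
  qed
  then show "(\<lambda>\<rho>. emeasure (mu X \<rho>) A) \<in> borel_measurable (Tm k (Tm k X))"
    by (rule measurable_cong[THEN iffD1, rotated]) (auto simp: emeasure_mu A dest: space_TmD)
qed

lemma prob_emeasure_le1: "prob_space \<rho> \<Longrightarrow> emeasure \<rho> S \<le> 1"
  by (metis emeasure_space prob_space.emeasure_space_1)

lemma G:
  fixes Y :: "'b measure" and N :: "'c measure"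
  assumes phi: "\<phi> \<in> measurable N (subprob_algebra Y)"
    and phi01: "\<And>z A. z \<in> space N \<Longrightarrow> A \<in> sets Y \<Longrightarrow> emeasure (\<phi> z) A = 0 \<or> emeasure (\<phi> z) A = 1"
    and rho: "prob_space \<rho>" "sets \<rho> = sets N"
    and rho01: "\<And>B. B \<in> sets N \<Longrightarrow> emeasure \<rho> B = 0 \<or> emeasure \<rho> B = 1"
    and m: "m \<in> space (subprob_algebra Y)"
    and mA: "\<And>A. A \<in> sets Y \<Longrightarrow> emeasure m A = emeasure \<rho> {z \<in> space N. emeasure (\<phi> z) A = 1}"
    and B: "B \<in> sets (subprob_algebra Y)"
  shows "m \<in> B \<longleftrightarrow> emeasure \<rho> (\<phi> -` B \<inter> space N) = 1"
proof -
  let ?\<Omega> = "space (subprob_algebra Y)"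
  define \<Sigma> where "\<Sigma> = {B \<in> sets (subprob_algebra Y). (m \<in> B \<longleftrightarrow> emeasure \<rho> (\<phi> -` B \<inter> space N) = 1)}"
  have spr: "space \<rho> = space N" using rho(2) by (rule sets_eq_imp_space_eq)
  have pre: "\<And>B. B \<in> sets (subprob_algebra Y) \<Longrightarrow> \<phi> -` B \<inter> space N \<in> sets N"
    using phi by (rule measurable_sets)
  have phisp: "\<And>z. z \<in> space N \<Longrightarrow> \<phi> z \<in> ?\<Omega>" using phi by (rule measurable_space)
  have c1: "emeasure \<rho> (space N - S) = 1 \<longleftrightarrow> emeasure \<rho> S \<noteq> 1" if S: "S \<in> sets N" for S
  proof -
    have "emeasure \<rho> (space N - S) = emeasure \<rho> (space \<rho>) - emeasure \<rho> S"
      using emeasure_compl[of S \<rho>] S rho by (simp add: spr prob_space.emeasure_space_1 prob_space_imp_subprob_space subprob_space.emeasure_subprob_space_less_top)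
    then show ?thesis using rho01[OF S] prob_space.emeasure_space_1[OF rho(1)] by auto
  qed
  have sa: "sigma_algebra ?\<Omega> \<Sigma>"
    unfolding sigma_algebra_iff2
  proof (intro conjI ballI allI impI)
    show "\<Sigma> \<subseteq> Pow ?\<Omega>" unfolding \<Sigma>_def using sets.sets_into_space by auto
    show "{} \<in> \<Sigma>" unfolding \<Sigma>_def by simp
  next
    fix s assume s: "s \<in> \<Sigma>"
    then have s': "s \<in> sets (subprob_algebra Y)" unfolding \<Sigma>_def by simp
    have eq: "\<phi> -` (?\<Omega> - s) \<inter> space N = space N - (\<phi> -` s \<inter> space N)"
      using phisp by auto
    have e2: "emeasure \<rho> (\<phi> -` (?\<Omega> - s) \<inter> space N) = 1 \<longleftrightarrow> emeasure \<rho> (\<phi> -` s \<inter> space N) \<noteq> 1"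
      unfolding eq using c1 pre s' by simp
    show "?\<Omega> - s \<in> \<Sigma>"
      using s s' m e2 unfolding \<Sigma>_def by auto
  next
    fix A :: "nat \<Rightarrow> _" assume A: "range A \<subseteq> \<Sigma>"
    then have A': "range A \<subseteq> sets (subprob_algebra Y)" unfolding \<Sigma>_def by auto
    have eq: "\<phi> -` (\<Union>i. A i) \<inter> space N = (\<Union>i. \<phi> -` A i \<inter> space N)" by auto
    have UNs: "(\<Union>i. \<phi> -` A i \<inter> space N) \<in> sets N"
      using A' pre by (intro sets.countable_UN) auto
    have "(\<exists>i. emeasure \<rho> (\<phi> -` A i \<inter> space N) = 1) \<longleftrightarrow> emeasure \<rho> (\<Union>i. \<phi> -` A i \<inter> space N) = 1"
    proof
      assume "\<exists>i. emeasure \<rho> (\<phi> -` A i \<inter> space N) = 1"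
      then obtain i where i: "emeasure \<rho> (\<phi> -` A i \<inter> space N) = 1" by blast
      have "emeasure \<rho> (\<phi> -` A i \<inter> space N) \<le> emeasure \<rho> (\<Union>i. \<phi> -` A i \<inter> space N)"
        apply (rule emeasure_mono) using UNs rho(2) by auto
      then show "emeasure \<rho> (\<Union>i. \<phi> -` A i \<inter> space N) = 1"
        using i prob_emeasure_le1[OF rho(1)] by (metis antisym)
    next
      assume h: "emeasure \<rho> (\<Union>i. \<phi> -` A i \<inter> space N) = 1"
      show "\<exists>i. emeasure \<rho> (\<phi> -` A i \<inter> space N) = 1"
      proof (rule ccontr)
        assume "\<not> ?thesis"
        then have "\<And>i. emeasure \<rho> (\<phi> -` A i \<inter> space N) = 0" using rho01 pre A' by blast
        then have "emeasure \<rho> (\<Union>i. \<phi> -` A i \<inter> space N) = 0"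
          by (rule emeasure_UN_eq_0) (use A' pre rho(2) in auto)
        then show False using h by simp
      qed
    qed
    then have e3: "(\<exists>i. emeasure \<rho> (\<phi> -` A i \<inter> space N) = 1) \<longleftrightarrow> emeasure \<rho> (\<phi> -` (\<Union>i. A i) \<inter> space N) = 1"
      by (simp only: eq)
    have e4: "(m \<in> (\<Union>i. A i)) \<longleftrightarrow> (\<exists>i. emeasure \<rho> (\<phi> -` A i \<inter> space N) = 1)"
      using A unfolding \<Sigma>_def by blast
    have e5: "(\<Union>i. A i) \<in> sets (subprob_algebra Y)" using A' by auto
    show "(\<Union>i. A i) \<in> \<Sigma>" unfolding \<Sigma>_def using e3 e4 e5 by simp
  qed
  define M where "M = measure_of ?\<Omega> \<Sigma> (\<lambda>_. 0)"
  have sM: "sets M = \<Sigma>" unfolding M_def using sigma_algebra.sets_measure_of_eq[OF sa] .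
  have spM: "space M = ?\<Omega>" unfolding M_def
    using space_measure_of[of \<Sigma> ?\<Omega>] sa by (simp add: sigma_algebra_iff2)
  have "(\<lambda>q. q) \<in> measurable M (subprob_algebra Y)"
  proof (rule measurable_subprob_algebra)
    fix a assume "a \<in> space M"
    then show "subprob_space a" "sets a = sets Y" using spM by (auto simp: space_subprob_algebra)
  next
    fix A assume A: "A \<in> sets Y"
    define S where "S = {z \<in> space N. emeasure (\<phi> z) A = 1}"
    have "(\<lambda>z. emeasure (\<phi> z) A) \<in> borel_measurable N"
      using measurable_emeasure_kernel[OF phi A] .
    then have S: "S \<in> sets N" unfolding S_def by measurable
    have mAS: "emeasure m A = emeasure \<rho> S" unfolding S_def by (rule mA[OF A])
    show "(\<lambda>q. emeasure q A) \<in> borel_measurable M"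
      unfolding measurable_def
    proof (intro CollectI conjI ballI)
      show "(\<lambda>q. emeasure q A) \<in> space M \<rightarrow> space borel" by simp
      fix Ob :: "ennreal set" assume Ob: "Ob \<in> sets borel"
      let ?V = "(\<lambda>q. emeasure q A) -` Ob \<inter> ?\<Omega>"
      have V: "?V \<in> sets (subprob_algebra Y)"
        using measurable_sets[OF measurable_emeasure_subprob_algebra[OF A] Ob] .
      have eq: "\<phi> -` ?V \<inter> space N = (if 1 \<in> Ob then S else {}) \<union> (if 0 \<in> Ob then space N - S else {})"
        unfolding S_def using phisp phi01[OF _ A] by (auto split: if_splits; metis)
      have "m \<in> ?V \<longleftrightarrow> emeasure \<rho> (\<phi> -` ?V \<inter> space N) = 1"
        unfolding eq using m mAS rho01[OF S] c1[OF S] prob_space.emeasure_space_1[OF rho(1)]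
        by (cases "0 \<in> Ob"; cases "1 \<in> Ob"; auto simp: spr Un_absorb1 sets.sets_into_space[OF S])
      then show "(\<lambda>q. emeasure q A) -` Ob \<inter> space M \<in> sets M"
        unfolding sM spM \<Sigma>_def using V by auto
    qed
  qed
  from measurable_sets[OF this B] have "B \<in> \<Sigma>"
    using sets.sets_into_space[OF B] by (simp add: sM spM Int_absorb2)
  then show ?thesis unfolding \<Sigma>_def by simp
qed

lemma G_Tm:
  fixes Y :: "'b measure" and N :: "'c measure"
  assumes phi: "\<phi> \<in> measurable N (Tm k Y)"
    and phi01: "\<And>z A. z \<in> space N \<Longrightarrow> A \<in> sets Y \<Longrightarrow> emeasure (\<phi> z) A = 0 \<or> emeasure (\<phi> z) A = 1"
    and rho: "prob_space \<rho>" "sets \<rho> = sets N"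
    and rho01: "\<And>B. B \<in> sets N \<Longrightarrow> emeasure \<rho> B = 0 \<or> emeasure \<rho> B = 1"
    and m: "m \<in> space (Tm k Y)"
    and mA: "\<And>A. A \<in> sets Y \<Longrightarrow> emeasure m A = emeasure \<rho> {z \<in> space N. emeasure (\<phi> z) A = 1}"
    and B: "B \<in> sets (Tm k Y)"
  shows "m \<in> B \<longleftrightarrow> emeasure \<rho> (\<phi> -` B \<inter> space N) = 1"
proof (cases k)
  case Subprob
  then show ?thesis using G[OF _ phi01 rho rho01 _ mA] phi m B by (simp add: Tm_def)
next
  case Giry
  then obtain B' where B': "B' \<in> sets (subprob_algebra Y)" "B = {M. prob_space M} \<inter> B'"
    using B by (auto simp: Tm_def prob_algebra_def sets_restrict_space)
  have phi': "\<phi> \<in> measurable N (subprob_algebra Y)" using phi Giry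
    by (simp add: Tm_def measurable_prob_algebraD)
  have phip: "\<And>z. z \<in> space N \<Longrightarrow> prob_space (\<phi> z)"
    using measurable_space[OF phi] Giry by (auto simp: space_Tm)
  have mp: "prob_space m" using m Giry by (simp add: space_Tm)
  have m': "m \<in> space (subprob_algebra Y)" using m Giry
    by (auto simp: space_Tm space_subprob_algebra prob_space_imp_subprob_space)
  have e1: "m \<in> B \<longleftrightarrow> m \<in> B'" using B' mp by auto
  have e2: "\<phi> -` B \<inter> space N = \<phi> -` B' \<inter> space N" using B' phip by auto
  show ?thesis unfolding e1 e2 by (rule G[OF phi' phi01 rho rho01 m' mA B'(1)])
qed

lemma space_Dsp: "space (Dsp k Y) = {p \<in> space (Tm k Y). return (Tm k Y) p = distr p (Tm k Y) (return Y)}"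
  by (auto simp: Dsp_def space_restrict_space)

lemma D_char: "p \<in> space (Dsp k Y) \<longleftrightarrow>
   sets p = sets Y \<and> prob_space p \<and> (\<forall>A\<in>sets Y. emeasure p A = 0 \<or> emeasure p A = 1)"
proof
  assume "p \<in> space (Dsp k Y)"
  then have p: "p \<in> space (Tm k Y)" and E: "return (Tm k Y) p = distr p (Tm k Y) (return Y)"
    by (auto simp: space_Dsp)
  have sp: "sets p = sets Y" using space_TmD[OF p] by simp
  have spp: "space p = space Y" using sp by (rule sets_eq_imp_space_eq)
  have ret: "return Y \<in> measurable p (Tm k Y)"
    using measurable_return_Tm[of Y k] sp by (simp cong: measurable_cong_sets)
  have "emeasure (return (Tm k Y) p) (space (Tm k Y)) = 1" using p by simp
  also have "emeasure (return (Tm k Y) p) (space (Tm k Y)) = emeasure p (space p)"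
    unfolding E using ret measurable_space[OF ret] by (subst emeasure_distr) (auto intro!: arg_cong[where f="emeasure p"])
  finally have pr: "prob_space p" by (intro prob_spaceI)
  have "emeasure p A = 0 \<or> emeasure p A = 1" if A: "A \<in> sets Y" for A
  proof -
    define BA where "BA = (\<lambda>q. emeasure q A) -` {1} \<inter> space (Tm k Y)"
    have BA: "BA \<in> sets (Tm k Y)" unfolding BA_def
      by (rule measurable_sets[OF measurable_emeasure_Tm[OF A]]) simp
    have eqA: "return Y -` BA \<inter> space p = A"
      using measurable_space[OF ret] sets.sets_into_space[OF A] A by (auto simp: BA_def spp indicator_def split: if_splits)
    have "emeasure (return (Tm k Y) p) BA = emeasure p A"
      unfolding E using ret BA by (subst emeasure_distr) (auto simp: eqA)
    then show ?thesis using BA by (cases "p \<in> BA") (auto simp: indicator_def)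
  qed
  then show "sets p = sets Y \<and> prob_space p \<and> (\<forall>A\<in>sets Y. emeasure p A = 0 \<or> emeasure p A = 1)"
    using sp pr by auto
next
  assume "sets p = sets Y \<and> prob_space p \<and> (\<forall>A\<in>sets Y. emeasure p A = 0 \<or> emeasure p A = 1)"
  then have sp: "sets p = sets Y" and pr: "prob_space p" and z: "\<And>A. A \<in> sets Y \<Longrightarrow> emeasure p A = 0 \<or> emeasure p A = 1"
    by auto
  have p: "p \<in> space (Tm k Y)" using prob_in_Tm[OF sp pr] .
  have spp: "space p = space Y" using sp by (rule sets_eq_imp_space_eq)
  have ret: "return Y \<in> measurable p (Tm k Y)"
    using measurable_return_Tm[of Y k] sp by (simp cong: measurable_cong_sets)
  have "return (Tm k Y) p = distr p (Tm k Y) (return Y)"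
  proof (rule measure_eqI)
    fix B assume "B \<in> sets (return (Tm k Y) p)"
    then have B: "B \<in> sets (Tm k Y)" by simp
    have key: "p \<in> B \<longleftrightarrow> emeasure p (return Y -` B \<inter> space Y) = 1"
    proof (rule G_Tm[OF measurable_return_Tm _ pr sp z p _ B])
      fix A assume A: "A \<in> sets Y"
      have "{z \<in> space Y. emeasure (return Y z) A = 1} = A"
        using sets.sets_into_space[OF A] A by (auto split: split_indicator)
      then show "emeasure p A = emeasure p {z \<in> space Y. emeasure (return Y z) A = 1}" by simp
    qed (auto split: split_indicator)
    have pre: "return Y -` B \<inter> space Y \<in> sets Y"
      using measurable_sets[OF measurable_return_Tm B] .
    show "emeasure (return (Tm k Y) p) B = emeasure (distr p (Tm k Y) (return Y)) B"
      using ret B key z[OF pre] by (subst emeasure_distr) (auto simp: spp indicator_def)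
  qed simp
  then show "p \<in> space (Dsp k Y)" using p by (simp add: space_Dsp)
qed

lemma theta_eq: "theta = (\<lambda>p. p)" by (rule ext) (simp add: theta_def)

lemma Dmult_eq: "Dmult k X \<rho> = mu X (distr \<rho> (Tm k X) (\<lambda>p. p))"
  by (simp add: Dmult_def theta_eq)

lemma L1: "(\<lambda>p. p) \<in> measurable (Dsp k X) (Tm k X)"
  unfolding Dsp_def by (rule measurable_restrict_space1[OF measurable_id])

lemma L2:
  assumes "f \<in> measurable M (Tm k X)" "\<And>x. x \<in> space M \<Longrightarrow> f x \<in> space (Dsp k X)"
  shows "f \<in> measurable M (Dsp k X)"
  unfolding Dsp_def
  by (rule measurable_restrict_space2) (use assms in \<open>auto simp: space_Dsp\<close>)

lemma L3: "return X \<in> measurable X (Dsp k X)"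
  by (rule L2[OF measurable_return_Tm]) (auto simp: D_char prob_space_return split: split_indicator)

lemma L4:
  assumes g: "g \<in> measurable X Y"
  shows "(\<lambda>p. distr p Y g) \<in> measurable (Dsp k X) (Dsp k Y)"
proof (rule L2)
  show "(\<lambda>p. distr p Y g) \<in> measurable (Dsp k X) (Tm k Y)"
    unfolding Dsp_def by (rule measurable_restrict_space1[OF measurable_distr_Tm[OF g]])
next
  fix p assume "p \<in> space (Dsp k X)"
  then have sp: "sets p = sets X" and pr: "prob_space p" and z: "\<And>A. A \<in> sets X \<Longrightarrow> emeasure p A = 0 \<or> emeasure p A = 1"
    by (auto simp: D_char)
  have g': "g \<in> measurable p Y" using g sp by (simp cong: measurable_cong_sets)
  have spp: "space p = space X" using sp by (rule sets_eq_imp_space_eq)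
  show "distr p Y g \<in> space (Dsp k Y)"
    unfolding D_char
  proof (intro conjI ballI)
    show "prob_space (distr p Y g)" using prob_space.prob_space_distr[OF pr g'] .
    fix A assume A: "A \<in> sets Y"
    have "g -` A \<inter> space X \<in> sets X" using measurable_sets[OF g A] .
    then show "emeasure (distr p Y g) A = 0 \<or> emeasure (distr p Y g) A = 1"
      using z A g' by (simp add: emeasure_distr spp)
  qed simp
qed

lemma L5:
  assumes "sets \<rho> = sets (Dsp k X)" "A \<in> sets X"
  shows "emeasure (Dmult k X \<rho>) A = (\<integral>\<^sup>+ q. emeasure q A \<partial>\<rho>)"
proof -
  have m: "(\<lambda>p. p) \<in> measurable \<rho> (Tm k X)" using L1 assms(1) by (simp cong: measurable_cong_sets)
  show ?thesis unfolding Dmult_eq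
    by (subst emeasure_mu[where k=k]) (use assms m in \<open>auto simp: nn_integral_distr measurable_emeasure_Tm\<close>)
qed

lemma measurable_emeasure_D: "A \<in> sets X \<Longrightarrow> (\<lambda>p. emeasure p A) \<in> borel_measurable (Dsp k X)"
  unfolding Dsp_def by (rule measurable_restrict_space1[OF measurable_emeasure_Tm])

lemma L6:
  assumes r: "\<rho> \<in> space (Dsp k (Dsp k X))"
  shows "Dmult k X \<rho> \<in> space (Dsp k X)"
    and "\<And>A. A \<in> sets X \<Longrightarrow> emeasure (Dmult k X \<rho>) A = emeasure \<rho> {q \<in> space (Dsp k X). emeasure q A = 1}"
proof -
  have sr: "sets \<rho> = sets (Dsp k X)" and pr: "prob_space \<rho>"
    and z: "\<And>B. B \<in> sets (Dsp k X) \<Longrightarrow> emeasure \<rho> B = 0 \<or> emeasure \<rho> B = 1"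
    using r by (auto simp: D_char)
  have spr: "space \<rho> = space (Dsp k X)" using sr by (rule sets_eq_imp_space_eq)
  have BA: "{q \<in> space (Dsp k X). emeasure q A = 1} \<in> sets (Dsp k X)" if A: "A \<in> sets X" for A
    using measurable_emeasure_D[OF A, of k] by measurable
  show eA: "emeasure (Dmult k X \<rho>) A = emeasure \<rho> {q \<in> space (Dsp k X). emeasure q A = 1}" if A: "A \<in> sets X" for A
  proof -
    have "emeasure (Dmult k X \<rho>) A = (\<integral>\<^sup>+ q. emeasure q A \<partial>\<rho>)" by (rule L5[OF sr A])
    also have "\<dots> = (\<integral>\<^sup>+ q. indicator {q \<in> space (Dsp k X). emeasure q A = 1} q \<partial>\<rho>)"
    proof (rule nn_integral_cong)
      fix q assume "q \<in> space \<rho>"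
      then have "q \<in> space (Dsp k X)" using spr by simp
      then have "emeasure q A = 0 \<or> emeasure q A = 1" using A by (auto simp: D_char)
      then show "emeasure q A = indicator {q \<in> space (Dsp k X). emeasure q A = 1} q"
        using \<open>q \<in> space (Dsp k X)\<close> by (auto simp: indicator_def)
    qed
    also have "\<dots> = emeasure \<rho> {q \<in> space (Dsp k X). emeasure q A = 1}"
      using BA[OF A] sr by (simp add: nn_integral_indicator)
    finally show ?thesis .
  qed
  have "{q \<in> space (Dsp k X). emeasure q (space X) = 1} = space (Dsp k X)"
    by (auto simp: D_char dest: prob_space.emeasure_space_1 sets_eq_imp_space_eq)
      (metis prob_space.emeasure_space_1 sets_eq_imp_space_eq)
  then have "emeasure (Dmult k X \<rho>) (space X) = 1"
    using eA[OF sets.top] prob_space.emeasure_space_1[OF pr] spr by simp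
  then have "prob_space (Dmult k X \<rho>)" by (intro prob_spaceI) (simp add: Dmult_eq)
  then show "Dmult k X \<rho> \<in> space (Dsp k X)"
    unfolding D_char using eA z BA by (auto simp: Dmult_eq)
qed

lemma L7: "Dmult k X \<in> measurable (Dsp k (Dsp k X)) (Dsp k X)"
proof (rule L2)
  have a: "(\<lambda>\<rho>. distr \<rho> (Tm k X) (\<lambda>p. p)) \<in> measurable (Dsp k (Dsp k X)) (Tm k (Tm k X))"
    unfolding Dsp_def[of k "Dsp k X"] by (rule measurable_restrict_space1[OF measurable_distr_Tm[OF L1]])
  have "(\<lambda>\<rho>. mu X (distr \<rho> (Tm k X) (\<lambda>p. p))) \<in> measurable (Dsp k (Dsp k X)) (Tm k X)"
    using measurable_compose[OF a measurable_mu] .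
  then show "Dmult k X \<in> measurable (Dsp k (Dsp k X)) (Tm k X)"
    by (simp add: Dmult_eq[abs_def])
qed (rule L6(1))

lemma L8:
  assumes p: "p \<in> space (Dsp k X)"
  shows "Dmult k X (return (Dsp k X) p) = p"
proof (rule measure_eqI)
  show "sets (Dmult k X (return (Dsp k X) p)) = sets p" using p by (simp add: Dmult_eq D_char)
  fix A assume "A \<in> sets (Dmult k X (return (Dsp k X) p))"
  then have A: "A \<in> sets X" by (simp add: Dmult_eq)
  show "emeasure (Dmult k X (return (Dsp k X) p)) A = emeasure p A"
    by (subst L5) (use A p in \<open>auto simp: nn_integral_return measurable_emeasure_D\<close>)
qed

lemma L9:
  assumes p: "p \<in> space (Dsp k X)"
  shows "Dmult k X (distr p (Dsp k X) (return X)) = p"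
proof (rule measure_eqI)
  have sp: "sets p = sets X" using p by (simp add: D_char)
  have spp: "space p = space X" using sp by (rule sets_eq_imp_space_eq)
  show "sets (Dmult k X (distr p (Dsp k X) (return X))) = sets p" using sp by (simp add: Dmult_eq)
  fix A assume "A \<in> sets (Dmult k X (distr p (Dsp k X) (return X)))"
  then have A: "A \<in> sets X" by (simp add: Dmult_eq)
  have r: "return X \<in> measurable p (Dsp k X)" using L3 sp by (simp cong: measurable_cong_sets)
  have "emeasure (Dmult k X (distr p (Dsp k X) (return X))) A = (\<integral>\<^sup>+ y. emeasure (return X y) A \<partial>p)"
    by (subst L5) (use A r in \<open>auto simp: nn_integral_distr measurable_emeasure_D\<close>)
  also have "\<dots> = (\<integral>\<^sup>+ y. indicator A y \<partial>p)"
    by (rule nn_integral_cong) (simp add: A)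
  also have "\<dots> = emeasure p A" using A sp by simp
  finally show "emeasure (Dmult k X (distr p (Dsp k X) (return X))) A = emeasure p A" .
qed

lemma L10: "return (Dsp k X) \<in> measurable (Dsp k X) (Dsp k (Dsp k X))"
  by (rule L2[OF measurable_return_Tm]) (auto simp: D_char[of _ k "Dsp k X"] prob_space_return split: split_indicator)

lemma L11:
  assumes r: "\<rho> \<in> space (Dsp k (Dsp k X))"
  shows "return (Dsp k X) (Dmult k X \<rho>) = \<rho>"
proof (rule measure_eqI)
  have sr: "sets \<rho> = sets (Dsp k X)" and pr: "prob_space \<rho>"
    and z: "\<And>B. B \<in> sets (Dsp k X) \<Longrightarrow> emeasure \<rho> B = 0 \<or> emeasure \<rho> B = 1"
    using r by (auto simp: D_char)
  define m where "m = Dmult k X \<rho>"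
  have mD: "m \<in> space (Dsp k X)" unfolding m_def by (rule L6(1)[OF r])
  then have mT: "m \<in> space (Tm k X)" by (simp add: space_Dsp)
  show "sets (return (Dsp k X) (Dmult k X \<rho>)) = sets \<rho>" using sr by simp
  fix B assume "B \<in> sets (return (Dsp k X) (Dmult k X \<rho>))"
  then have B: "B \<in> sets (Dsp k X)" by simp
  then obtain B' where B': "B' \<in> sets (Tm k X)" "B = space (Dsp k X) \<inter> B'"
    unfolding Dsp_def[of k X] by (auto simp: sets_restrict_space space_restrict_space)
  have key: "m \<in> B' \<longleftrightarrow> emeasure \<rho> ((\<lambda>q. q) -` B' \<inter> space (Dsp k X)) = 1"
  proof (rule G_Tm[OF L1 _ pr sr z mT _ B'(1)])
    fix z A assume "z \<in> space (Dsp k X)" "A \<in> sets X"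
    then show "emeasure z A = 0 \<or> emeasure z A = 1" by (auto simp: D_char)
  next
    fix A assume "A \<in> sets X"
    then show "emeasure m A = emeasure \<rho> {z \<in> space (Dsp k X). emeasure z A = 1}"
      unfolding m_def by (rule L6(2)[OF r])
  qed
  have e: "(\<lambda>q. q) -` B' \<inter> space (Dsp k X) = B" using B'(2) by auto
  show "emeasure (return (Dsp k X) (Dmult k X \<rho>)) B = emeasure \<rho> B"
    using key z[OF B] mD B'(2) B unfolding e m_def[symmetric] by (auto simp: indicator_def)
qed



lemma ennreal_idem: "(x::ennreal) = x * x \<Longrightarrow> x \<noteq> top \<Longrightarrow> x = 0 \<or> x = 1"
proof -
  assume h: "x = x * x" "x \<noteq> top"
  obtain r where r: "x = ennreal r" "r \<ge> 0" using h(2) by (cases x) auto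
  then have "ennreal r = ennreal (r * r)" using h(1) by (simp add: ennreal_mult'')
  then have "r = r * r" using r(2) by (subst (asm) ennreal_inj) auto
  then have "r = 0 \<or> r = 1" by (metis mult_cancel_right1 mult_eq_0_iff)
  then show ?thesis using r by auto
qed

lemma diag_meas: "(\<lambda>y. (y, y)) \<in> measurable Y (Y \<Otimes>\<^sub>M Y)" by simp

lemma K1:
  assumes p: "p \<in> space (Tm k Y)"
  shows "mu (Y \<Otimes>\<^sub>M Y) (distr p (Tm k (Y \<Otimes>\<^sub>M Y)) (kcopy Y)) = distr p (Y \<Otimes>\<^sub>M Y) (\<lambda>y. (y, y))"
proof (rule measure_eqI)
  have sp: "sets p = sets Y" using space_TmD[OF p] by simp
  have kc: "kcopy Y \<in> measurable p (Tm k (Y \<Otimes>\<^sub>M Y))"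
    using measurable_compose[OF diag_meas measurable_return_Tm, of Y k] sp
    by (simp add: kcopy_def[abs_def] cong: measurable_cong_sets)
  have dg: "(\<lambda>y. (y, y)) \<in> measurable p (Y \<Otimes>\<^sub>M Y)" using sp by (simp cong: measurable_cong_sets)
  show "sets (mu (Y \<Otimes>\<^sub>M Y) (distr p (Tm k (Y \<Otimes>\<^sub>M Y)) (kcopy Y))) = sets (distr p (Y \<Otimes>\<^sub>M Y) (\<lambda>y. (y, y)))"
    by simp
  fix C assume "C \<in> sets (mu (Y \<Otimes>\<^sub>M Y) (distr p (Tm k (Y \<Otimes>\<^sub>M Y)) (kcopy Y)))"
  then have C: "C \<in> sets (Y \<Otimes>\<^sub>M Y)" by simp
  have "emeasure (mu (Y \<Otimes>\<^sub>M Y) (distr p (Tm k (Y \<Otimes>\<^sub>M Y)) (kcopy Y))) C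
      = (\<integral>\<^sup>+ q. emeasure q C \<partial>distr p (Tm k (Y \<Otimes>\<^sub>M Y)) (kcopy Y))"
    by (rule emeasure_mu[where k=k]) (use C in auto)
  also have "\<dots> = (\<integral>\<^sup>+ y. emeasure (kcopy Y y) C \<partial>p)"
    using kc C by (simp add: nn_integral_distr measurable_emeasure_Tm)
  also have "\<dots> = (\<integral>\<^sup>+ y. indicator C (y, y) \<partial>p)"
    using C by (intro nn_integral_cong) (simp add: kcopy_def)
  also have "\<dots> = (\<integral>\<^sup>+ z. indicator C z \<partial>distr p (Y \<Otimes>\<^sub>M Y) (\<lambda>y. (y, y)))"
    by (rule nn_integral_distr[OF dg, of "indicator C", symmetric]) (use C in simp)
  also have "\<dots> = emeasure (distr p (Y \<Otimes>\<^sub>M Y) (\<lambda>y. (y, y))) C" using C by simp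
  finally show "emeasure (mu (Y \<Otimes>\<^sub>M Y) (distr p (Tm k (Y \<Otimes>\<^sub>M Y)) (kcopy Y))) C
      = emeasure (distr p (Y \<Otimes>\<^sub>M Y) (\<lambda>y. (y, y))) C" .
qed

lemma ktensor_meas:
  assumes f: "f \<in> measurable X (Tm k Y)"
  shows "ktensor f f \<in> measurable (X \<Otimes>\<^sub>M X) (Tm k (Y \<Otimes>\<^sub>M Y))"
proof -
  have e: "ktensor f f = (\<lambda>z. f (fst z) \<Otimes>\<^sub>M f (snd z))" by (auto simp: ktensor_def)
  have f1: "(\<lambda>z. f (fst z)) \<in> measurable (X \<Otimes>\<^sub>M X) (Tm k Y)" using f by simp
  have f2: "(\<lambda>z. f (snd z)) \<in> measurable (X \<Otimes>\<^sub>M X) (Tm k Y)" using f by simp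
  show ?thesis unfolding e
  proof (cases k)
    case Giry then show "(\<lambda>z. f (fst z) \<Otimes>\<^sub>M f (snd z)) \<in> measurable (X \<Otimes>\<^sub>M X) (Tm k (Y \<Otimes>\<^sub>M Y))"
      using measurable_pair_prob[OF f1[unfolded Giry Tm_def, simplified] f2[unfolded Giry Tm_def, simplified]]
      by (simp add: Tm_def)
  next
    case Subprob then show "(\<lambda>z. f (fst z) \<Otimes>\<^sub>M f (snd z)) \<in> measurable (X \<Otimes>\<^sub>M X) (Tm k (Y \<Otimes>\<^sub>M Y))"
      using measurable_pair_measure[OF f1[unfolded Subprob Tm_def, simplified] f2[unfolded Subprob Tm_def, simplified]]
      by (simp add: Tm_def)
  qed
qed

lemma K2:
  assumes f: "f \<in> measurable X (Tm k Y)" and x: "x \<in> space X"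
  shows "kcomp k (Y \<Otimes>\<^sub>M Y) (ktensor f f) (kcopy X) x = f x \<Otimes>\<^sub>M f x"
proof -
  have xx: "(x, x) \<in> space (X \<Otimes>\<^sub>M X)" using x by (simp add: space_pair_measure)
  have "ktensor f f (x, x) \<in> space (Tm k (Y \<Otimes>\<^sub>M Y))"
    using measurable_space[OF ktensor_meas[OF f] xx] .
  then show ?thesis
    unfolding kcomp_def kcopy_def
    by (simp add: distr_return[OF ktensor_meas[OF f] xx] mu_return) (simp add: ktensor_def)
qed

lemma K3:
  assumes p: "p \<in> space (Tm k Y)"
  shows "mu one_space (distr p (Tm k one_space) (kdel Y)) = return one_space () \<longleftrightarrow> emeasure p (space Y) = 1"
proof -
  have sp: "sets p = sets Y" using space_TmD[OF p] by simp
  have spp: "space p = space Y" using sp by (rule sets_eq_imp_space_eq)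
  have r1: "return one_space () \<in> space (Tm k one_space)"
    by (rule prob_in_Tm) (auto simp: one_space_def prob_space_return)
  have kd: "kdel Y \<in> measurable p (Tm k one_space)"
    unfolding kdel_def using r1 by simp
  have em: "emeasure (mu one_space (distr p (Tm k one_space) (kdel Y))) C = indicator C () * emeasure p (space Y)"
    if C: "C \<in> sets one_space" for C
  proof -
    have "emeasure (mu one_space (distr p (Tm k one_space) (kdel Y))) C
      = (\<integral>\<^sup>+ q. emeasure q C \<partial>distr p (Tm k one_space) (kdel Y))"
      by (rule emeasure_mu[where k=k]) (use C in auto)
    also have "\<dots> = (\<integral>\<^sup>+ y. emeasure (kdel Y y) C \<partial>p)"
      using kd C by (simp add: nn_integral_distr measurable_emeasure_Tm)
    also have "\<dots> = (\<integral>\<^sup>+ y. indicator C () \<partial>p)"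
      using C by (intro nn_integral_cong) (simp add: kdel_def)
    also have "\<dots> = indicator C () * emeasure p (space Y)" by (simp add: spp)
    finally show ?thesis .
  qed
  show ?thesis
  proof
    assume h: "mu one_space (distr p (Tm k one_space) (kdel Y)) = return one_space ()"
    have "emeasure (return one_space ()) UNIV = 1" by (simp add: one_space_def)
    then show "emeasure p (space Y) = 1"
      using em[of UNIV] unfolding h by (simp add: one_space_def)
  next
    assume h: "emeasure p (space Y) = 1"
    show "mu one_space (distr p (Tm k one_space) (kdel Y)) = return one_space ()"
    proof (rule measure_eqI)
      fix C assume "C \<in> sets (mu one_space (distr p (Tm k one_space) (kdel Y)))"
      then have C: "C \<in> sets one_space" by simp
      show "emeasure (mu one_space (distr p (Tm k one_space) (kdel Y))) C = emeasure (return one_space ()) C"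
        using em[OF C] h emeasure_return[OF C, of "()"] by simp
    qed simp
  qed
qed

lemma K4:
  assumes p: "p \<in> space (Tm k Y)"
  shows "(distr p (Y \<Otimes>\<^sub>M Y) (\<lambda>y. (y, y)) = p \<Otimes>\<^sub>M p \<and> emeasure p (space Y) = 1) \<longleftrightarrow> p \<in> space (Dsp k Y)"
proof -
  have sp: "sets p = sets Y" using space_TmD[OF p] by simp
  have spp: "space p = space Y" using sp by (rule sets_eq_imp_space_eq)
  have dg: "(\<lambda>y. (y, y)) \<in> measurable p (Y \<Otimes>\<^sub>M Y)" using sp by (simp cong: measurable_cong_sets)
  have edg: "emeasure (distr p (Y \<Otimes>\<^sub>M Y) (\<lambda>y. (y, y))) (A \<times> B) = emeasure p (A \<inter> B)"
    if A: "A \<in> sets Y" and B: "B \<in> sets Y" for A B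
  proof -
    have "(\<lambda>y. (y, y)) -` (A \<times> B) \<inter> space p = A \<inter> B"
      using sets.sets_into_space[OF A] by (auto simp: spp)
    then show ?thesis using dg A B by (simp add: emeasure_distr)
  qed
  show ?thesis
  proof
    assume h: "distr p (Y \<Otimes>\<^sub>M Y) (\<lambda>y. (y, y)) = p \<Otimes>\<^sub>M p \<and> emeasure p (space Y) = 1"
    have pr: "prob_space p" using h spp by (intro prob_spaceI) simp
    interpret sigma_finite_measure p using pr by (rule prob_space_imp_sigma_finite)
    have "emeasure p A = 0 \<or> emeasure p A = 1" if A: "A \<in> sets Y" for A
    proof (rule ennreal_idem)
      have "emeasure p A = emeasure (distr p (Y \<Otimes>\<^sub>M Y) (\<lambda>y. (y, y))) (A \<times> A)" using edg[OF A A] by simp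
      also have "\<dots> = emeasure p A * emeasure p A" using h A sp by (simp add: emeasure_pair_measure_Times)
      finally show "emeasure p A = emeasure p A * emeasure p A" .
      show "emeasure p A \<noteq> top" using pr by (simp add: subprob_space.emeasure_subprob_space_less_top[OF prob_space_imp_subprob_space[OF pr]])
    qed
    then show "p \<in> space (Dsp k Y)" using sp pr by (simp add: D_char)
  next
    assume "p \<in> space (Dsp k Y)"
    then have pr: "prob_space p" and z: "\<And>A. A \<in> sets Y \<Longrightarrow> emeasure p A = 0 \<or> emeasure p A = 1"
      by (auto simp: D_char)
    have sf: "sigma_finite_measure p" using pr by (rule prob_space_imp_sigma_finite)
    have le1: "\<And>S. emeasure p S \<le> 1" using prob_emeasure_le1[OF pr] .
    have "p \<Otimes>\<^sub>M p = distr p (Y \<Otimes>\<^sub>M Y) (\<lambda>y. (y, y))"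
    proof (rule pair_measure_eqI[OF sf sf])
      show "sets (p \<Otimes>\<^sub>M p) = sets (distr p (Y \<Otimes>\<^sub>M Y) (\<lambda>y. (y, y)))"
        using sets_pair_measure_cong[OF sp sp] by simp
      fix A B assume "A \<in> sets p" "B \<in> sets p"
      then have A: "A \<in> sets Y" and B: "B \<in> sets Y" using sp by auto
      have "emeasure p A * emeasure p B = emeasure p (A \<inter> B)"
      proof (cases "emeasure p A = 1 \<and> emeasure p B = 1")
        case True
        have "emeasure p A \<le> emeasure p (A \<union> B)" using A B sp by (intro emeasure_mono) auto
        then have u: "emeasure p (A \<union> B) = 1" using True le1 by (metis antisym)
        have "emeasure p A + emeasure p B = emeasure p (A \<union> B) + emeasure p (A \<inter> B)"
          using A B sp by (intro emeasure_Un_Int) auto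
        then have "1 + 1 = 1 + emeasure p (A \<inter> B)" using True u by simp
        then have "emeasure p (A \<inter> B) = 1"
          by (subst (asm) ennreal_add_left_cancel) simp
        then show ?thesis using True by simp
      next
        case False
        then have "emeasure p A = 0 \<or> emeasure p B = 0" using z A B by blast
        moreover have "emeasure p (A \<inter> B) \<le> emeasure p A" "emeasure p (A \<inter> B) \<le> emeasure p B"
          using A B sp by (auto intro!: emeasure_mono)
        ultimately show ?thesis by auto
      qed
      then show "emeasure p A * emeasure p B = emeasure (distr p (Y \<Otimes>\<^sub>M Y) (\<lambda>y. (y, y))) (A \<times> B)"
        using edg[OF A B] by simp
    qed
    then show "distr p (Y \<Otimes>\<^sub>M Y) (\<lambda>y. (y, y)) = p \<Otimes>\<^sub>M p \<and> emeasure p (space Y) = 1"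
      using prob_space.emeasure_space_1[OF pr] spp by simp
  qed
qed

lemma det_char:
  assumes f: "f \<in> measurable X (Tm k Y)"
  shows "deterministic k X Y f \<longleftrightarrow> (\<forall>x\<in>space X. f x \<in> space (Dsp k Y))"
proof -
  have "(kcomp k (Y \<Otimes>\<^sub>M Y) (kcopy Y) f x = kcomp k (Y \<Otimes>\<^sub>M Y) (ktensor f f) (kcopy X) x \<and>
         kcomp k one_space (kdel Y) f x = kdel X x) \<longleftrightarrow> f x \<in> space (Dsp k Y)"
    if x: "x \<in> space X" for x
  proof -
    have fx: "f x \<in> space (Tm k Y)" using measurable_space[OF f x] .
    have a: "kcomp k (Y \<Otimes>\<^sub>M Y) (kcopy Y) f x = distr (f x) (Y \<Otimes>\<^sub>M Y) (\<lambda>y. (y, y))"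
      unfolding kcomp_def using K1[OF fx] .
    have b: "kcomp k one_space (kdel Y) f x = kdel X x \<longleftrightarrow> emeasure (f x) (space Y) = 1"
      unfolding kcomp_def using K3[OF fx] by (simp add: kdel_def)
    show ?thesis unfolding a b K2[OF f x] using K4[OF fx] .
  qed
  then show ?thesis unfolding deterministic_def by blast
qed

theorem corollary9p3:
  fixes k :: giry_kind and X :: "'a measure" and Y :: "'b measure"
  shows
    \<comment> \<open>D is a submonad: the action on morphisms, unit and multiplication factor through theta\<close>
    "(\<forall>g \<in> measurable X Y. \<exists>Dg \<in> measurable (Dsp k X) (Dsp k Y).
        \<forall>p \<in> space (Dsp k X). theta (Dg p) = distr (theta p) Y g)
   \<and> (\<exists>e \<in> measurable X (Dsp k X). \<forall>x \<in> space X. theta (e x) = return X x)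
   \<and> Dmult k X \<in> measurable (Dsp k (Dsp k X)) (Dsp k X)
   \<comment> \<open>the monad laws for D\<close>
   \<and> (\<forall>p \<in> space (Dsp k X). Dmult k X (return (Dsp k X) p) = p)
   \<and> (\<forall>p \<in> space (Dsp k X). Dmult k X (distr p (Dsp k X) (return X)) = p)
   \<and> (\<forall>R \<in> space (Dsp k (Dsp k (Dsp k X))).
        Dmult k X (Dmult k (Dsp k X) R) = Dmult k X (distr R (Dsp k X) (Dmult k X)))
   \<comment> \<open>D is idempotent: its multiplication is an isomorphism in Meas\<close>
   \<and> (\<exists>h \<in> measurable (Dsp k X) (Dsp k (Dsp k X)).
        (\<forall>\<rho> \<in> space (Dsp k (Dsp k X)). h (Dmult k X \<rho>) = \<rho>) \<and>
        (\<forall>p \<in> space (Dsp k X). Dmult k X (h p) = p))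
   \<comment> \<open>deterministic Kleisli morphisms are exactly those factoring through theta\<close>
   \<and> (\<forall>f \<in> measurable X (Tm k Y).
        deterministic k X Y f \<longleftrightarrow>
        (\<exists>h \<in> measurable X (Dsp k Y). \<forall>x \<in> space X. theta (h x) = f x))"
proof (intro conjI ballI)
  fix g assume g: "g \<in> measurable X Y"
  show "\<exists>Dg \<in> measurable (Dsp k X) (Dsp k Y). \<forall>p \<in> space (Dsp k X). theta (Dg p) = distr (theta p) Y g"
    by (rule bexI[OF _ L4[OF g]]) (simp add: theta_def)
next
  show "\<exists>e \<in> measurable X (Dsp k X). \<forall>x \<in> space X. theta (e x) = return X x"
    by (rule bexI[OF _ L3]) (simp add: theta_def)
next
  show "Dmult k X \<in> measurable (Dsp k (Dsp k X)) (Dsp k X)" by (rule L7)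
next
  fix p assume "p \<in> space (Dsp k X)"
  then show "Dmult k X (return (Dsp k X) p) = p" by (rule L8)
next
  fix p assume "p \<in> space (Dsp k X)"
  then show "Dmult k X (distr p (Dsp k X) (return X)) = p" by (rule L9)
next
  fix R assume R: "R \<in> space (Dsp k (Dsp k (Dsp k X)))"
  define s where "s = Dmult k (Dsp k X) R"
  have s: "s \<in> space (Dsp k (Dsp k X))" unfolding s_def by (rule L6(1)[OF R])
  have Rs: "R = return (Dsp k (Dsp k X)) s" unfolding s_def using L11[OF R] by simp
  have ms: "Dmult k X s \<in> space (Dsp k X)" by (rule L6(1)[OF s])
  have "distr R (Dsp k X) (Dmult k X) = return (Dsp k X) (Dmult k X s)"
    unfolding Rs by (rule distr_return[OF L7 s])
  then have "Dmult k X (distr R (Dsp k X) (Dmult k X)) = Dmult k X s"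
    using L8[OF ms] by simp
  then show "Dmult k X (Dmult k (Dsp k X) R) = Dmult k X (distr R (Dsp k X) (Dmult k X))"
    unfolding s_def by simp
next
  show "\<exists>h \<in> measurable (Dsp k X) (Dsp k (Dsp k X)).
        (\<forall>\<rho> \<in> space (Dsp k (Dsp k X)). h (Dmult k X \<rho>) = \<rho>) \<and>
        (\<forall>p \<in> space (Dsp k X). Dmult k X (h p) = p)"
    by (rule bexI[OF _ L10]) (simp add: L11 L8)
next
  fix f assume f: "f \<in> measurable X (Tm k Y)"
  show "deterministic k X Y f \<longleftrightarrow> (\<exists>h \<in> measurable X (Dsp k Y). \<forall>x \<in> space X. theta (h x) = f x)"
    unfolding det_char[OF f]
  proof
    assume h: "\<forall>x\<in>space X. f x \<in> space (Dsp k Y)"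
    have "f \<in> measurable X (Dsp k Y)" by (rule L2[OF f]) (use h in auto)
    then show "\<exists>h \<in> measurable X (Dsp k Y). \<forall>x \<in> space X. theta (h x) = f x"
      by (rule bexI[rotated]) (simp add: theta_def)
  next
    assume "\<exists>h \<in> measurable X (Dsp k Y). \<forall>x \<in> space X. theta (h x) = f x"
    then obtain h where h: "h \<in> measurable X (Dsp k Y)" "\<And>x. x \<in> space X \<Longrightarrow> h x = f x"
      unfolding theta_def by blast
    show "\<forall>x\<in>space X. f x \<in> space (Dsp k Y)"
    proof
      fix x assume x: "x \<in> space X"
      show "f x \<in> space (Dsp k Y)" using measurable_space[OF h(1) x] h(2)[OF x] by simp
    qed
  qed
qed

end
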